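(* Let $S,T$ be $\mathbb{G}$-stopping times and let $T'=T_{\{S\le T<\infty\}}$. Suppose that $[S,T)\in\mathcal{L}^o$, that $[T']\in\mathcal{L}^o$, and that the process $\mathbf{1}_{[T']}$ satisfies the optional splitting formula on $[S,T]$. Then $[S,T]\in\mathcal{L}^o$.
   Context: Let $(\Omega,\mathcal{A},\mathbb{Q})$ be a probability space with a right-continuous filtration $\mathbb{F}=(\mathcal{F}_t)_{t\ge0}$ such that $\mathcal{F}_0$ contains $\mathcal{N}^{\mathcal{F}_\infty}$, where for a $\sigma$-algebra $\mathcal{T}\subset\mathcal{A}$, $\mathcal{N}^{\mathcal{T}}$ denotes the $\sigma$-algebra generated by all subsets of $\mathcal{T}$-measurable $\mathbb{Q}$-null sets. Let $\tau$ be a random variable with values in $[0,\infty]$, let $\mathcal{N}=\mathcal{N}^{\sigma(\tau)\vee\mathcal{F}_\infty}$, and let $\mathbb{G}=(\mathcal{G}_t)_{t\ge0}$ with $\mathcal{G}_t=\mathcal{N}\vee\bigcap_{s>t}(\mathcal{F}_s\vee\sigma(\tau\wedge s))$. Identities are understood up to $\mathcal{N}$-measurable $\mathbb{Q}$-null sets. For a function $Y''$ on $[0,\infty]\times(\mathbb{R}_+\times\Omega)$, $Y''(\tau)$ denotes $(t,\omega)\mapsto Y''(\tau(\omega),t,\omega)$. A $\mathbb{G}$-optional process $Y$ satisfies the optional splitting formula on a $\mathbb{G}$-optional set $A$ if there exist $Y'\in\mathcal{O}(\mathbb{F})$ and a $\mathcal{B}[0,\infty]\otimes\mathcal{O}(\mathbb{F})$-measurable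 $Y''$ with $Y\mathbf{1}_A=(Y'\mathbf{1}_{[0,\tau)}+Y''(\tau)\mathbf{1}_{[\tau,\infty)})\mathbf{1}_A$; $\mathcal{L}^o$ is the family of $\mathbb{G}$-optional sets on which every $\mathbb{G}$-optional process satisfies it. For a $\mathbb{G}$-stopping time $T$ and $A\in\mathcal{G}_T$, $T_A=T$ on $A$ and $T_A=\infty$ on $A^c$; $[R]$ denotes the graph $\{(t,\omega)\in\mathbb{R}_+\times\Omega:t=R(\omega)\}$. *)

theory Defs
  imports "HOL-Probability.Probability"
begin

text \<open>Setting: \<Omega> = space Q, \<A> = sets Q. Time index \<real>_+ (reals t \<ge> 0);
  random times take values in [0,\<infinity>] = ennreal. A filtration is a map
  real \<Rightarrow> 'a set set (only t \<ge> 0 matters). Processes are maps real \<Rightarrow> 'a \<Rightarrow> real,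
  only their values on \<real>_+ \<times> \<Omega> matter.\<close>

definition join :: "'a set \<Rightarrow> 'a set set \<Rightarrow> 'a set set \<Rightarrow> 'a set set" where
  "join \<Omega> A B = sigma_sets \<Omega> (A \<union> B)"

definition null_gen :: "'a measure \<Rightarrow> 'a set set \<Rightarrow> 'a set set" where
  "null_gen Q T = sigma_sets (space Q)
      {B. \<exists>N\<in>T. N \<in> sets Q \<and> emeasure Q N = 0 \<and> B \<subseteq> N}"

definition F_inf :: "'a measure \<Rightarrow> (real \<Rightarrow> 'a set set) \<Rightarrow> 'a set set" where
  "F_inf Q F = sigma_sets (space Q) (\<Union>t\<in>{0..}. F t)"

definition sig_of :: "'a measure \<Rightarrow> ('a \<Rightarrow> ennreal) \<Rightarrow> 'a set set" where
  "sig_of Q f = {f -` B \<inter> space Q | B. B \<in> sets (borel :: ennreal measure)}"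

definition tauF :: "'a measure \<Rightarrow> (real \<Rightarrow> 'a set set) \<Rightarrow> ('a \<Rightarrow> ennreal) \<Rightarrow> 'a set set" where
  "tauF Q F \<tau> = join (space Q) (sig_of Q \<tau>) (F_inf Q F)"

definition calN :: "'a measure \<Rightarrow> (real \<Rightarrow> 'a set set) \<Rightarrow> ('a \<Rightarrow> ennreal) \<Rightarrow> 'a set set" where
  "calN Q F \<tau> = null_gen Q (tauF Q F \<tau>)"

definition Gfilt :: "'a measure \<Rightarrow> (real \<Rightarrow> 'a set set) \<Rightarrow> ('a \<Rightarrow> ennreal) \<Rightarrow> real \<Rightarrow> 'a set set" where
  "Gfilt Q F \<tau> t = join (space Q) (calN Q F \<tau>)
      (\<Inter>s\<in>{t<..}. join (space Q) (F s) (sig_of Q (\<lambda>\<omega>. min (\<tau> \<omega>) (ennreal s))))"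

text \<open>A set B \<subseteq> \<Omega> is an \<N>-measurable Q-null set iff it is contained in a Q-null
  set from sigma(tau) \<or> F_infinity; identities up to such sets are expressed by this.\<close>
definition negligible :: "'a measure \<Rightarrow> (real \<Rightarrow> 'a set set) \<Rightarrow> ('a \<Rightarrow> ennreal) \<Rightarrow> 'a set \<Rightarrow> bool" where
  "negligible Q F \<tau> B \<longleftrightarrow> (\<exists>N\<in>tauF Q F \<tau>. emeasure Q N = 0 \<and> B \<subseteq> N)"

definition filtration_on :: "'a measure \<Rightarrow> (real \<Rightarrow> 'a set set) \<Rightarrow> bool" where
  "filtration_on Q F \<longleftrightarrow>
     (\<forall>t\<ge>0. sigma_algebra (space Q) (F t) \<and> F t \<subseteq> sets Q) \<and>
     (\<forall>s t. 0 \<le> s \<longrightarrow> s \<le> t \<longrightarrow> F s \<subseteq> F t)"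

definition right_continuous_filt :: "(real \<Rightarrow> 'a set set) \<Rightarrow> bool" where
  "right_continuous_filt F \<longleftrightarrow> (\<forall>t\<ge>0. F t = (\<Inter>s\<in>{t<..}. F s))"

definition E :: "'a set \<Rightarrow> (real \<times> 'a) set" where
  "E \<Omega> = {t. 0 \<le> t} \<times> \<Omega>"

definition adapted :: "'a set \<Rightarrow> (real \<Rightarrow> 'a set set) \<Rightarrow> (real \<Rightarrow> 'a \<Rightarrow> real) \<Rightarrow> bool" where
  "adapted \<Omega> H X \<longleftrightarrow>
     (\<forall>t\<ge>0. \<forall>B\<in>sets (borel :: real measure). {\<omega>\<in>\<Omega>. X t \<omega> \<in> B} \<in> H t)"

definition cadlag :: "'a set \<Rightarrow> (real \<Rightarrow> 'a \<Rightarrow> real) \<Rightarrow> bool" where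
  "cadlag \<Omega> X \<longleftrightarrow> (\<forall>\<omega>\<in>\<Omega>. \<forall>t\<ge>0.
      continuous (at_right t) (\<lambda>s. X s \<omega>) \<and>
      (0 < t \<longrightarrow> (\<exists>l. ((\<lambda>s. X s \<omega>) \<longlongrightarrow> l) (at_left t))))"

definition optional :: "'a set \<Rightarrow> (real \<Rightarrow> 'a set set) \<Rightarrow> (real \<times> 'a) set set" where
  "optional \<Omega> H = sigma_sets (E \<Omega>)
     {{(t,\<omega>)\<in>E \<Omega>. X t \<omega> \<in> B} | X B.
        adapted \<Omega> H X \<and> cadlag \<Omega> X \<and> B \<in> sets (borel :: real measure)}"

definition optional_process :: "'a set \<Rightarrow> (real \<Rightarrow> 'a set set) \<Rightarrow> (real \<Rightarrow> 'a \<Rightarrow> real) \<Rightarrow> bool" where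
  "optional_process \<Omega> H Y \<longleftrightarrow>
     (\<forall>B\<in>sets (borel :: real measure). {(t,\<omega>)\<in>E \<Omega>. Y t \<omega> \<in> B} \<in> optional \<Omega> H)"

definition BO_measurable :: "'a set \<Rightarrow> (real \<Rightarrow> 'a set set) \<Rightarrow> (ennreal \<Rightarrow> real \<Rightarrow> 'a \<Rightarrow> real) \<Rightarrow> bool" where
  "BO_measurable \<Omega> F Y'' \<longleftrightarrow>
     (\<forall>B\<in>sets (borel :: real measure).
        {(u,t,\<omega>). (t,\<omega>) \<in> E \<Omega> \<and> Y'' u t \<omega> \<in> B} \<in>
        sigma_sets (UNIV \<times> E \<Omega>)
          {U \<times> C | U C. U \<in> sets (borel :: ennreal measure) \<and> C \<in> optional \<Omega> F})"

definition splitting :: "'a measure \<Rightarrow> (real \<Rightarrow> 'a set set) \<Rightarrow> ('a \<Rightarrow> ennreal)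
    \<Rightarrow> (real \<Rightarrow> 'a \<Rightarrow> real) \<Rightarrow> (real \<times> 'a) set \<Rightarrow> bool" where
  "splitting Q F \<tau> Y A \<longleftrightarrow> (\<exists>Y' Y''.
     optional_process (space Q) F Y' \<and> BO_measurable (space Q) F Y'' \<and>
     negligible Q F \<tau> {\<omega>\<in>space Q. \<exists>t\<ge>0. (t,\<omega>) \<in> A \<and>
        Y t \<omega> \<noteq> (if ennreal t < \<tau> \<omega> then Y' t \<omega> else Y'' (\<tau> \<omega>) t \<omega>)})"

definition Lo :: "'a measure \<Rightarrow> (real \<Rightarrow> 'a set set) \<Rightarrow> ('a \<Rightarrow> ennreal) \<Rightarrow> (real \<times> 'a) set set" where
  "Lo Q F \<tau> = {A. A \<in> optional (space Q) (Gfilt Q F \<tau>) \<and>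
      (\<forall>Y. optional_process (space Q) (Gfilt Q F \<tau>) Y \<longrightarrow> splitting Q F \<tau> Y A)}"

definition stopping_time_on :: "'a set \<Rightarrow> (real \<Rightarrow> 'a set set) \<Rightarrow> ('a \<Rightarrow> ennreal) \<Rightarrow> bool" where
  "stopping_time_on \<Omega> H T \<longleftrightarrow> (\<forall>t\<ge>0. {\<omega>\<in>\<Omega>. T \<omega> \<le> ennreal t} \<in> H t)"

definition sint_co :: "'a set \<Rightarrow> ('a \<Rightarrow> ennreal) \<Rightarrow> ('a \<Rightarrow> ennreal) \<Rightarrow> (real \<times> 'a) set" where
  "sint_co \<Omega> S T = {(t,\<omega>)\<in>E \<Omega>. S \<omega> \<le> ennreal t \<and> ennreal t < T \<omega>}"

definition sint_cc :: "'a set \<Rightarrow> ('a \<Rightarrow> ennreal) \<Rightarrow> ('a \<Rightarrow> ennreal) \<Rightarrow> (real \<times> 'a) set" where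
  "sint_cc \<Omega> S T = {(t,\<omega>)\<in>E \<Omega>. S \<omega> \<le> ennreal t \<and> ennreal t \<le> T \<omega>}"

definition graph :: "'a set \<Rightarrow> ('a \<Rightarrow> ennreal) \<Rightarrow> (real \<times> 'a) set" where
  "graph \<Omega> R = {(t,\<omega>)\<in>E \<Omega>. ennreal t = R \<omega>}"

definition restrict_time :: "('a \<Rightarrow> ennreal) \<Rightarrow> 'a set \<Rightarrow> 'a \<Rightarrow> ennreal" where
  "restrict_time T A \<omega> = (if \<omega> \<in> A then T \<omega> else \<infinity>)"

end

theory Submission
  imports Defs
begin

lemma piecewise_meas:
  assumes "sigma_algebra \<Omega> M" "{x\<in>\<Omega>. p x} \<in> M" "{x\<in>\<Omega>. f x \<in> B} \<in> M" "{x\<in>\<Omega>. g x \<in> B} \<in> M"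
  shows "{x\<in>\<Omega>. (if p x then f x else g x) \<in> B} \<in> M"
proof -
  have "{x\<in>\<Omega>. (if p x then f x else g x) \<in> B} =
     ({x\<in>\<Omega>. p x} \<inter> {x\<in>\<Omega>. f x \<in> B}) \<union> ((\<Omega> - {x\<in>\<Omega>. p x}) \<inter> {x\<in>\<Omega>. g x \<in> B})"
    by auto
  also have "\<dots> \<in> M"
  proof -
    interpret sigma_algebra \<Omega> M by fact
    show ?thesis using assms(2-4) by (intro Un Int Diff top) auto
  qed
  finally show ?thesis .
qed

lemma optional_sa: "sigma_algebra (E \<Omega>) (optional \<Omega> H)"
  unfolding optional_def by (rule sigma_algebra_sigma_sets) auto

lemma opt_piecewise:
  assumes "optional_process \<Omega> H Z" "optional_process \<Omega> H Y1" "optional_process \<Omega> H Y2"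
  shows "optional_process \<Omega> H (\<lambda>t \<omega>. if Z t \<omega> \<noteq> 0 then Y2 t \<omega> else Y1 t \<omega>)"
  unfolding optional_process_def
proof
  fix B :: "real set" assume B: "B \<in> sets borel"
  have c: "- {0::real} \<in> sets borel" by simp
  have conv: "\<And>P. {(t,\<omega>)\<in>E \<Omega>. P t \<omega>} = {x\<in>E \<Omega>. P (fst x) (snd x)}" by auto
  show "{(t,\<omega>)\<in>E \<Omega>. (if Z t \<omega> \<noteq> 0 then Y2 t \<omega> else Y1 t \<omega>) \<in> B} \<in> optional \<Omega> H"
    unfolding conv
  proof (rule piecewise_meas[OF optional_sa])
    show "{x \<in> E \<Omega>. Z (fst x) (snd x) \<noteq> 0} \<in> optional \<Omega> H"
    proof -
      have "{x \<in> E \<Omega>. Z (fst x) (snd x) \<noteq> 0} = {x \<in> E \<Omega>. Z (fst x) (snd x) \<in> - {0}}" by auto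
      moreover have "{x \<in> E \<Omega>. Z (fst x) (snd x) \<in> - {0}} \<in> optional \<Omega> H"
        using assms(1) c unfolding optional_process_def conv by blast
      ultimately show ?thesis by simp
    qed
    show "{x \<in> E \<Omega>. Y2 (fst x) (snd x) \<in> B} \<in> optional \<Omega> H"
      using assms(3) B unfolding optional_process_def conv by blast
    show "{x \<in> E \<Omega>. Y1 (fst x) (snd x) \<in> B} \<in> optional \<Omega> H"
      using assms(2) B unfolding optional_process_def conv by blast
  qed
qed

lemma BO_sa: "sigma_algebra (UNIV \<times> E \<Omega>)
          (sigma_sets (UNIV \<times> E \<Omega>)
          {U \<times> C | U C. U \<in> sets (borel :: ennreal measure) \<and> C \<in> optional \<Omega> F})"
proof (rule sigma_algebra_sigma_sets)
  have "\<And>C. C \<in> optional \<Omega> F \<Longrightarrow> C \<subseteq> E \<Omega>"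
  proof -
    interpret sigma_algebra "E \<Omega>" "optional \<Omega> F" by (rule optional_sa)
    show "\<And>C. C \<in> optional \<Omega> F \<Longrightarrow> C \<subseteq> E \<Omega>" using sets_into_space by blast
  qed
  then show "{U \<times> C | U C. U \<in> sets (borel :: ennreal measure) \<and> C \<in> optional \<Omega> F} \<subseteq> Pow (UNIV \<times> E \<Omega>)"
    by blast
qed

lemma BO_piecewise:
  assumes "BO_measurable \<Omega> F Z" "BO_measurable \<Omega> F Y1" "BO_measurable \<Omega> F Y2"
  shows "BO_measurable \<Omega> F (\<lambda>u t \<omega>. if Z u t \<omega> \<noteq> 0 then Y2 u t \<omega> else Y1 u t \<omega>)"
  unfolding BO_measurable_def
proof
  fix B :: "real set" assume B: "B \<in> sets borel"
  have c: "- {0::real} \<in> sets borel" by simp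
  have conv: "\<And>P. {(u,t,\<omega>). (t,\<omega>)\<in>E \<Omega> \<and> P u t \<omega>} = {x\<in>UNIV \<times> E \<Omega>. P (fst x) (fst (snd x)) (snd (snd x))}" by auto
  show "{(u,t,\<omega>). (t,\<omega>)\<in>E \<Omega> \<and> (if Z u t \<omega> \<noteq> 0 then Y2 u t \<omega> else Y1 u t \<omega>) \<in> B} \<in> 
       sigma_sets (UNIV \<times> E \<Omega>)
          {U \<times> C | U C. U \<in> sets (borel :: ennreal measure) \<and> C \<in> optional \<Omega> F}"
    unfolding conv
  proof (rule piecewise_meas[OF BO_sa])
    show "{x \<in> UNIV \<times> E \<Omega>. Z (fst x) (fst (snd x)) (snd (snd x)) \<noteq> 0} \<in> sigma_sets (UNIV \<times> E \<Omega>)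
          {U \<times> C | U C. U \<in> sets (borel :: ennreal measure) \<and> C \<in> optional \<Omega> F}"
    proof -
      have "{x \<in> UNIV \<times> E \<Omega>. Z (fst x) (fst (snd x)) (snd (snd x)) \<noteq> 0} = {x \<in> UNIV \<times> E \<Omega>. Z (fst x) (fst (snd x)) (snd (snd x)) \<in> - {0}}" by auto
      moreover have "{x \<in> UNIV \<times> E \<Omega>. Z (fst x) (fst (snd x)) (snd (snd x)) \<in> - {0}} \<in> sigma_sets (UNIV \<times> E \<Omega>)
          {U \<times> C | U C. U \<in> sets (borel :: ennreal measure) \<and> C \<in> optional \<Omega> F}"
        using assms(1) c unfolding BO_measurable_def conv by blast
      ultimately show ?thesis by simp
    qed
    show "{x \<in> UNIV \<times> E \<Omega>. Y2 (fst x) (fst (snd x)) (snd (snd x)) \<in> B} \<in> sigma_sets (UNIV \<times> E \<Omega>)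
          {U \<times> C | U C. U \<in> sets (borel :: ennreal measure) \<and> C \<in> optional \<Omega> F}"
      using assms(3) B unfolding BO_measurable_def conv by blast
    show "{x \<in> UNIV \<times> E \<Omega>. Y1 (fst x) (fst (snd x)) (snd (snd x)) \<in> B} \<in> sigma_sets (UNIV \<times> E \<Omega>)
          {U \<times> C | U C. U \<in> sets (borel :: ennreal measure) \<and> C \<in> optional \<Omega> F}"
      using assms(2) B unfolding BO_measurable_def conv by blast
  qed
qed

lemma tauF_sub:
  assumes "filtration_on Q F" "\<tau> \<in> borel_measurable Q"
  shows "tauF Q F \<tau> \<subseteq> sets Q"
proof -
  have 1: "sig_of Q \<tau> \<subseteq> sets Q"
    unfolding sig_of_def using assms(2) measurable_sets by blast
  have "(\<Union>t\<in>{0..}. F t) \<subseteq> sets Q" using assms(1) unfolding filtration_on_def by auto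
  then have 2: "F_inf Q F \<subseteq> sets Q"
    unfolding F_inf_def by (rule sets.sigma_sets_subset)
  show ?thesis unfolding tauF_def join_def
    by (rule sets.sigma_sets_subset) (use 1 2 in auto)
qed

lemma negl_mono: "negligible Q F \<tau> B \<Longrightarrow> A \<subseteq> B \<Longrightarrow> negligible Q F \<tau> A"
  unfolding negligible_def by blast

lemma negl_Un:
  assumes "tauF Q F \<tau> \<subseteq> sets Q" "negligible Q F \<tau> A" "negligible Q F \<tau> B"
  shows "negligible Q F \<tau> (A \<union> B)"
proof -
  obtain N1 where N1: "N1 \<in> tauF Q F \<tau>" "emeasure Q N1 = 0" "A \<subseteq> N1"
    using assms(2) unfolding negligible_def by blast
  obtain N2 where N2: "N2 \<in> tauF Q F \<tau>" "emeasure Q N2 = 0" "B \<subseteq> N2"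
    using assms(3) unfolding negligible_def by blast
  have "N1 \<union> N2 \<in> tauF Q F \<tau>" using N1 N2 unfolding tauF_def join_def by (simp add: sigma_sets_Un)
  moreover have "emeasure Q (N1 \<union> N2) = 0"
    using emeasure_subadditive[of N1 Q N2] N1 N2 assms(1) by auto
  ultimately show ?thesis unfolding negligible_def using N1 N2 by blast
qed

theorem mainTheorem8:
  fixes Q :: "'a measure" and F :: "real \<Rightarrow> 'a set set" and \<tau> S T :: "'a \<Rightarrow> ennreal"
  assumes "prob_space Q"
    and "filtration_on Q F"
    and "right_continuous_filt F"
    and "null_gen Q (F_inf Q F) \<subseteq> F 0"
    and "\<tau> \<in> borel_measurable Q"
    and "stopping_time_on (space Q) (Gfilt Q F \<tau>) S"
    and "stopping_time_on (space Q) (Gfilt Q F \<tau>) T"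
    and "sint_co (space Q) S T \<in> Lo Q F \<tau>"
    and "graph (space Q) (restrict_time T {\<omega>\<in>space Q. S \<omega> \<le> T \<omega> \<and> T \<omega> < \<infinity>}) \<in> Lo Q F \<tau>"
    and "splitting Q F \<tau>
           (\<lambda>t \<omega>. indicator (graph (space Q) (restrict_time T {\<omega>\<in>space Q. S \<omega> \<le> T \<omega> \<and> T \<omega> < \<infinity>})) (t, \<omega>))
           (sint_cc (space Q) S T)"
  shows "sint_cc (space Q) S T \<in> Lo Q F \<tau>"
proof -
  define A where "A = {\<omega>\<in>space Q. S \<omega> \<le> T \<omega> \<and> T \<omega> < \<infinity>}"
  define Gr where "Gr = graph (space Q) (restrict_time T A)"
  define Co where "Co = sint_co (space Q) S T"
  define Cc where "Cc = sint_cc (space Q) S T"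
  have eq: "Cc = Co \<union> Gr"
  proof (intro set_eqI iffI)
    fix x assume "x \<in> Cc"
    then obtain t \<omega> where x: "x = (t,\<omega>)" "t \<ge> 0" "\<omega> \<in> space Q" "S \<omega> \<le> ennreal t" "ennreal t \<le> T \<omega>"
      unfolding Cc_def sint_cc_def E_def by auto
    show "x \<in> Co \<union> Gr"
    proof (cases "ennreal t < T \<omega>")
      case True then show ?thesis using x unfolding Co_def sint_co_def E_def by auto
    next
      case False
      then have "T \<omega> = ennreal t" using x by auto
      then have "\<omega> \<in> A" using x unfolding A_def by auto
      then show ?thesis using x \<open>T \<omega> = ennreal t\<close> unfolding Gr_def graph_def restrict_time_def E_def by auto
    qed
  next
    fix x assume "x \<in> Co \<union> Gr"
    then show "x \<in> Cc"
    proof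
      assume "x \<in> Co" then show ?thesis unfolding Co_def Cc_def sint_co_def sint_cc_def by auto
    next
      assume "x \<in> Gr"
      then obtain t \<omega> where x: "x = (t,\<omega>)" "t \<ge> 0" "\<omega> \<in> space Q" "ennreal t = restrict_time T A \<omega>"
        unfolding Gr_def graph_def E_def by auto
      then have "\<omega> \<in> A" "T \<omega> = ennreal t" unfolding restrict_time_def by (auto split: if_splits)
      then show ?thesis using x unfolding A_def Cc_def sint_cc_def E_def by auto
    qed
  qed
  have disj: "(t,\<omega>) \<in> Co \<Longrightarrow> (t,\<omega>) \<notin> Gr" for t \<omega>
    unfolding Co_def Gr_def sint_co_def graph_def restrict_time_def by (auto split: if_splits)
  have tsub: "tauF Q F \<tau> \<subseteq> sets Q" using tauF_sub assms(2,5) by blast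
  have CoL: "Co \<in> Lo Q F \<tau>" and GrL: "Gr \<in> Lo Q F \<tau>"
    using assms(8,9) unfolding Co_def Gr_def A_def by auto
  have spl: "splitting Q F \<tau> (\<lambda>t \<omega>. indicator Gr (t, \<omega>)) Cc"
    using assms(10) unfolding Gr_def A_def Cc_def .
  have "Cc \<in> Lo Q F \<tau>" unfolding Lo_def
  proof (intro CollectI conjI allI impI)
    show "Cc \<in> optional (space Q) (Gfilt Q F \<tau>)"
      using CoL GrL unfolding eq Lo_def optional_def by (auto intro: sigma_sets_Un)
    fix Y assume Y: "optional_process (space Q) (Gfilt Q F \<tau>) Y"
    obtain Y1' Y1'' where Y1: "optional_process (space Q) F Y1'" "BO_measurable (space Q) F Y1''"
      "negligible Q F \<tau> {\<omega>\<in>space Q. \<exists>t\<ge>0. (t,\<omega>) \<in> Co \<and>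
        Y t \<omega> \<noteq> (if ennreal t < \<tau> \<omega> then Y1' t \<omega> else Y1'' (\<tau> \<omega>) t \<omega>)}"
      using CoL Y unfolding Lo_def splitting_def by blast
    obtain Y2' Y2'' where Y2: "optional_process (space Q) F Y2'" "BO_measurable (space Q) F Y2''"
      "negligible Q F \<tau> {\<omega>\<in>space Q. \<exists>t\<ge>0. (t,\<omega>) \<in> Gr \<and>
        Y t \<omega> \<noteq> (if ennreal t < \<tau> \<omega> then Y2' t \<omega> else Y2'' (\<tau> \<omega>) t \<omega>)}"
      using GrL Y unfolding Lo_def splitting_def by blast
    obtain Z' Z'' where Z: "optional_process (space Q) F Z'" "BO_measurable (space Q) F Z''"
      "negligible Q F \<tau> {\<omega>\<in>space Q. \<exists>t\<ge>0. (t,\<omega>) \<in> Cc \<and>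
        indicator Gr (t, \<omega>) \<noteq> (if ennreal t < \<tau> \<omega> then Z' t \<omega> else Z'' (\<tau> \<omega>) t \<omega>)}"
      using spl unfolding splitting_def by blast
    define Y' where "Y' = (\<lambda>t \<omega>. if Z' t \<omega> \<noteq> 0 then Y2' t \<omega> else Y1' t \<omega>)"
    define Y'' where "Y'' = (\<lambda>u t \<omega>. if Z'' u t \<omega> \<noteq> 0 then Y2'' u t \<omega> else Y1'' u t \<omega>)"
    show "splitting Q F \<tau> Y Cc"
      unfolding splitting_def
    proof (intro exI conjI)
      show "optional_process (space Q) F Y'" unfolding Y'_def by (rule opt_piecewise[OF Z(1) Y1(1) Y2(1)])
      show "BO_measurable (space Q) F Y''" unfolding Y''_def by (rule BO_piecewise[OF Z(2) Y1(2) Y2(2)])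
      have nB: "negligible Q F \<tau> (({\<omega>\<in>space Q. \<exists>t\<ge>0. (t,\<omega>) \<in> Co \<and>
        Y t \<omega> \<noteq> (if ennreal t < \<tau> \<omega> then Y1' t \<omega> else Y1'' (\<tau> \<omega>) t \<omega>)}
        \<union> {\<omega>\<in>space Q. \<exists>t\<ge>0. (t,\<omega>) \<in> Gr \<and>
        Y t \<omega> \<noteq> (if ennreal t < \<tau> \<omega> then Y2' t \<omega> else Y2'' (\<tau> \<omega>) t \<omega>)})
        \<union> {\<omega>\<in>space Q. \<exists>t\<ge>0. (t,\<omega>) \<in> Cc \<and>
        indicator Gr (t, \<omega>) \<noteq> (if ennreal t < \<tau> \<omega> then Z' t \<omega> else Z'' (\<tau> \<omega>) t \<omega>)})"
        by (intro negl_Un[OF tsub] Y1(3) Y2(3) Z(3))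
      show "negligible Q F \<tau> {\<omega>\<in>space Q. \<exists>t\<ge>0. (t,\<omega>) \<in> Cc \<and>
        Y t \<omega> \<noteq> (if ennreal t < \<tau> \<omega> then Y' t \<omega> else Y'' (\<tau> \<omega>) t \<omega>)}"
      proof (rule negl_mono[OF nB], rule subsetI)
        fix \<omega> assume "\<omega> \<in> {\<omega>\<in>space Q. \<exists>t\<ge>0. (t,\<omega>) \<in> Cc \<and>
        Y t \<omega> \<noteq> (if ennreal t < \<tau> \<omega> then Y' t \<omega> else Y'' (\<tau> \<omega>) t \<omega>)}"
        then obtain t where w: "\<omega> \<in> space Q" "t \<ge> 0" "(t,\<omega>) \<in> Cc"
          and ne: "Y t \<omega> \<noteq> (if ennreal t < \<tau> \<omega> then Y' t \<omega> else Y'' (\<tau> \<omega>) t \<omega>)"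
          by blast
        show "\<omega> \<in> ({\<omega>\<in>space Q. \<exists>t\<ge>0. (t,\<omega>) \<in> Co \<and>
        Y t \<omega> \<noteq> (if ennreal t < \<tau> \<omega> then Y1' t \<omega> else Y1'' (\<tau> \<omega>) t \<omega>)}
        \<union> {\<omega>\<in>space Q. \<exists>t\<ge>0. (t,\<omega>) \<in> Gr \<and>
        Y t \<omega> \<noteq> (if ennreal t < \<tau> \<omega> then Y2' t \<omega> else Y2'' (\<tau> \<omega>) t \<omega>)})
        \<union> {\<omega>\<in>space Q. \<exists>t\<ge>0. (t,\<omega>) \<in> Cc \<and>
        indicator Gr (t, \<omega>) \<noteq> (if ennreal t < \<tau> \<omega> then Z' t \<omega> else Z'' (\<tau> \<omega>) t \<omega>)}"
        proof (rule ccontr)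
          assume nn: "\<not> ?thesis"
          have n1: "(t,\<omega>) \<in> Co \<Longrightarrow> Y t \<omega> = (if ennreal t < \<tau> \<omega> then Y1' t \<omega> else Y1'' (\<tau> \<omega>) t \<omega>)"
            using nn w by blast
          have n2: "(t,\<omega>) \<in> Gr \<Longrightarrow> Y t \<omega> = (if ennreal t < \<tau> \<omega> then Y2' t \<omega> else Y2'' (\<tau> \<omega>) t \<omega>)"
            using nn w by blast
          have n3: "indicator Gr (t, \<omega>) = (if ennreal t < \<tau> \<omega> then Z' t \<omega> else Z'' (\<tau> \<omega>) t \<omega>)"
            using nn w by blast
          show False
          proof (cases "(t,\<omega>) \<in> Gr")
            case True
            then show False using n3 n2 w ne unfolding Y'_def Y''_def by (auto split: if_splits)
          next
            case False
            then have "(t,\<omega>) \<in> Co" using w eq by blast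
            then show False using False n3 n1 w ne unfolding Y'_def Y''_def by (auto split: if_splits)
          qed
        qed
      qed
    qed
  qed
  then show ?thesis unfolding Cc_def .
qed

end
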